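(* There exists an alternating Streett automaton $\mathcal{A}$ on infinite words, with all transition conditions in disjunctive normal form, that is $\exists$-GFG but for which there is no function $f\colon\Sigma^+\to\mathrm{Boxes}_{\mathcal{A}}$ with $f(ua)\in\mathrm{Boxes}_{\mathcal{A},a}$ for all $u\in\Sigma^*,a\in\Sigma$ such that, for every $w=w_0w_1\dots\in L(\mathcal{A})$, the sequence $f(w_0)f(w_0w_1)f(w_0w_1w_2)\cdots$ is universally accepting for $\mathcal{A}$.
   Context: An alternating automaton $\mathcal{A}=(\Sigma,Q,\iota,\delta,\alpha)$ has finite alphabet $\Sigma$, states $Q$, initial state $\iota$, transition function $\delta\colon Q\times\Sigma\to\mathcal{B}^+(Q)$ (positive Boolean formulas over atoms in $Q$); transitions are triples $(q,a,q')$. A Streett condition is a finite set of pairs $(B_i,G_i)$ of sets of transitions; an infinite transition sequence is accepting iff for every $i$ it visits $B_i$ finitely often or $G_i$ infinitely often. $L(\mathcal{A})$: in the model-checking game on $w=a_0a_1\dots$, from $\iota$, in round $i$ from $q_i$ the players descend $\delta(q_i,a_i)$, Eve choosing at disjunctions and Adam at conjunctions, to an atom $q_{i+1}$; Eve wins iff the transition sequence is accepting; $w\in L(\mathcal{A})$ iff Eve wins. Eve's letter game: each round Adam picks a letter and the players descend the transition condition of the current state over it; Eve wins iff the word is not in $L(\mathcal{A})$ or the path is accepting; $\mathcal{A}$ is $\exists$-GFG iff Eve wins it. Boxes: for a letter $a$, a local strategy chooses, for each $q$ and each subformula $\psi_1\vee\psi_2$ of $\delta(q,a)$, one disjunct;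 its box is the set of $(q,a,q')$ such that atom $q'$ is reachable from $\delta(q,a)$ following the local strategy at disjunctions and either conjunct at conjunctions; $\mathrm{Boxes}_{\mathcal{A},a}$ is the set of these boxes and $\mathrm{Boxes}_{\mathcal{A}}=\bigcup_a\mathrm{Boxes}_{\mathcal{A},a}$. A sequence of boxes $\beta_0\beta_1\dots$ is universally accepting if every transition sequence $(q_i,a_i,q_{i+1})_i$ with $q_0=\iota$ and $(q_i,a_i,q_{i+1})\in\beta_i$ for all $i$ is accepting. *)

theory Defs
  imports Main
begin

datatype 'q pbf = Atom 'q | Conj "'q pbf" "'q pbf" | Disj "'q pbf" "'q pbf"

fun atoms :: "'q pbf \<Rightarrow> 'q set" where
  "atoms (Atom q) = {q}"
| "atoms (Conj f g) = atoms f \<union> atoms g"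
| "atoms (Disj f g) = atoms f \<union> atoms g"

fun conj_clause :: "'q pbf \<Rightarrow> bool" where
  "conj_clause (Atom q) = True"
| "conj_clause (Conj f g) = (conj_clause f \<and> conj_clause g)"
| "conj_clause (Disj f g) = False"

fun dnf :: "'q pbf \<Rightarrow> bool" where
  "dnf (Disj f g) = (dnf f \<and> dnf g)"
| "dnf f = conj_clause f"

text \<open>Transitions (q, a, q'); letters and states are natural numbers, the
  actual alphabet and state set are finite carrier sets.\<close>
type_synonym trans = "nat \<times> nat \<times> nat"

record streett_aut =
  alphabet :: "nat set"
  states :: "nat set"
  init :: nat
  delta :: "nat \<Rightarrow> nat \<Rightarrow> nat pbf"
  cond :: "(trans set \<times> trans set) list"

definition wf_aut :: "streett_aut \<Rightarrow> bool" where
  "wf_aut A \<longleftrightarrow> finite (alphabet A) \<and> alphabet A \<noteq> {} \<and> finite (states A)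
     \<and> init A \<in> states A
     \<and> (\<forall>q\<in>states A. \<forall>a\<in>alphabet A. atoms (delta A q a) \<subseteq> states A)
     \<and> (\<forall>(B, G)\<in>set (cond A). B \<union> G \<subseteq> states A \<times> alphabet A \<times> states A)"

definition streett_accepting :: "streett_aut \<Rightarrow> (nat \<Rightarrow> trans) \<Rightarrow> bool" where
  "streett_accepting A \<rho> \<longleftrightarrow>
     (\<forall>(B, G)\<in>set (cond A). finite {i. \<rho> i \<in> B} \<or> infinite {i. \<rho> i \<in> G})"

text \<open>Descending a formula: at a disjunction Eve's choice function decides
  (True = left disjunct), at a conjunction Adam's does (True = left conjunct).
  Choice functions are indexed by the position (path from the root).\<close>
fun resolve :: "'q pbf \<Rightarrow> (bool list \<Rightarrow> bool) \<Rightarrow> (bool list \<Rightarrow> bool) \<Rightarrow> 'q" where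
  "resolve (Atom q) e d = q"
| "resolve (Conj f g) e d =
     (if d [] then resolve f (\<lambda>p. e (True # p)) (\<lambda>p. d (True # p))
      else resolve g (\<lambda>p. e (False # p)) (\<lambda>p. d (False # p)))"
| "resolve (Disj f g) e d =
     (if e [] then resolve f (\<lambda>p. e (True # p)) (\<lambda>p. d (True # p))
      else resolve g (\<lambda>p. e (False # p)) (\<lambda>p. d (False # p)))"

text \<open>Strategies (full information): Eve's and Adam's choices within a round
  depend on the history of transitions so far, the current letter, and the
  position in the current transition condition. The letter of each round is
  given by a function of the history (fixed word in the model-checking game,
  Adam's choice in the letter game).\<close>
type_synonym strat = "trans list \<Rightarrow> nat \<Rightarrow> bool list \<Rightarrow> bool"

definition cur_state :: "streett_aut \<Rightarrow> trans list \<Rightarrow> nat" where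
  "cur_state A h = (if h = [] then init A else snd (snd (last h)))"

fun hist :: "streett_aut \<Rightarrow> (trans list \<Rightarrow> nat) \<Rightarrow> strat \<Rightarrow> strat \<Rightarrow> nat \<Rightarrow> trans list" where
  "hist A lf \<sigma> \<tau> 0 = []"
| "hist A lf \<sigma> \<tau> (Suc i) =
     (let h = hist A lf \<sigma> \<tau> i; q = cur_state A h; a = lf h
      in h @ [(q, a, resolve (delta A q a) (\<sigma> h a) (\<tau> h a))])"

definition play :: "streett_aut \<Rightarrow> (trans list \<Rightarrow> nat) \<Rightarrow> strat \<Rightarrow> strat \<Rightarrow> nat \<Rightarrow> trans" where
  "play A lf \<sigma> \<tau> i = last (hist A lf \<sigma> \<tau> (Suc i))"

definition played_word :: "streett_aut \<Rightarrow> (trans list \<Rightarrow> nat) \<Rightarrow> strat \<Rightarrow> strat \<Rightarrow> nat \<Rightarrow> nat" where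
  "played_word A lf \<sigma> \<tau> i = lf (hist A lf \<sigma> \<tau> i)"

definition lang :: "streett_aut \<Rightarrow> (nat \<Rightarrow> nat) set" where
  "lang A = {w. (\<forall>i. w i \<in> alphabet A) \<and>
     (\<exists>\<sigma>. \<forall>\<tau>. streett_accepting A (play A (\<lambda>h. w (length h)) \<sigma> \<tau>))}"

definition exists_gfg :: "streett_aut \<Rightarrow> bool" where
  "exists_gfg A \<longleftrightarrow> (\<exists>\<sigma>. \<forall>lf \<tau>. (\<forall>h. lf h \<in> alphabet A) \<longrightarrow>
     played_word A lf \<sigma> \<tau> \<notin> lang A \<or> streett_accepting A (play A lf \<sigma> \<tau>))"

text \<open>Boxes. A local strategy for letter a gives, for every state q, a choice
  at every disjunction (by position) of delta q a.\<close>
fun reach :: "'q pbf \<Rightarrow> (bool list \<Rightarrow> bool) \<Rightarrow> 'q set" where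
  "reach (Atom q) c = {q}"
| "reach (Conj f g) c = reach f (\<lambda>p. c (True # p)) \<union> reach g (\<lambda>p. c (False # p))"
| "reach (Disj f g) c = (if c [] then reach f (\<lambda>p. c (True # p)) else reach g (\<lambda>p. c (False # p)))"

definition box :: "streett_aut \<Rightarrow> nat \<Rightarrow> (nat \<Rightarrow> bool list \<Rightarrow> bool) \<Rightarrow> trans set" where
  "box A a ls = {(q, a, q') | q q'. q \<in> states A \<and> q' \<in> reach (delta A q a) (ls q)}"

definition boxes_letter :: "streett_aut \<Rightarrow> nat \<Rightarrow> trans set set" where
  "boxes_letter A a = range (box A a)"

definition boxes :: "streett_aut \<Rightarrow> trans set set" where
  "boxes A = (\<Union>a\<in>alphabet A. boxes_letter A a)"

definition univ_accepting :: "streett_aut \<Rightarrow> (nat \<Rightarrow> trans set) \<Rightarrow> bool" where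
  "univ_accepting A \<beta> \<longleftrightarrow> (\<forall>\<rho>::nat \<Rightarrow> trans.
     fst (\<rho> 0) = init A \<and> (\<forall>i. snd (snd (\<rho> i)) = fst (\<rho> (Suc i))) \<and> (\<forall>i. \<rho> i \<in> \<beta> i)
     \<longrightarrow> streett_accepting A \<rho>)"

end

theory Submission
  imports Defs
begin

definition dl :: "nat \<Rightarrow> nat pbf" where
  "dl q = (if q = 0 then Conj (Atom 1) (Atom 2) else if q = 1 \<or> q = 2 then Atom 3
           else if q = 3 then Disj (Atom 4) (Atom 5) else Atom 0)"

definition Aex :: streett_aut where
  "Aex = (| alphabet = {0}, states = {0..5}, init = 0, delta = (\<lambda>q a. dl q),
     cond = [({(3,0,4)},{(0,0,1)}), ({(3,0,5)},{(0,0,2)})] |)"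

lemma res1: "resolve (dl q) e d = 1 \<Longrightarrow> q = 0"
  by (auto simp: dl_def split: if_splits)
lemma res2: "resolve (dl q) e d = 2 \<Longrightarrow> q = 0"
  by (auto simp: dl_def split: if_splits)
lemma res3: "resolve (dl q) e d = 3 \<Longrightarrow> q = 1 \<or> q = 2"
  by (auto simp: dl_def split: if_splits)
lemma res3b: "resolve (dl 3) e d = (if e [] then 4 else 5)"
  by (auto simp: dl_def)

lemma play_eq: "play A lf \<sigma> \<tau> i = (let h = hist A lf \<sigma> \<tau> i; q = cur_state A h; a = lf h
      in (q, a, resolve (delta A q a) (\<sigma> h a) (\<tau> h a)))"
  by (simp add: play_def Let_def)

lemma last_hist: "last (hist A lf \<sigma> \<tau> (Suc k)) = play A lf \<sigma> \<tau> k"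
  by (simp add: play_def)

lemma cur_Suc: "cur_state A (hist A lf \<sigma> \<tau> (Suc k)) = snd (snd (play A lf \<sigma> \<tau> k))"
  by (simp add: cur_state_def play_def Let_def)

definition sig0 :: strat where "sig0 h a p = (fst (last h) = (1::nat))"

abbreviation "lf0 \<equiv> (\<lambda>h::trans list. 0::nat)"

lemma claim1:
  assumes "play Aex lf0 sig0 \<tau> i = (3,0,4)"
  shows "\<exists>m. i = m + 2 \<and> play Aex lf0 sig0 \<tau> m = (0,0,1)"
proof -
  let ?P = "play Aex lf0 sig0 \<tau>" and ?H = "hist Aex lf0 sig0 \<tau>"
  let ?st = "\<lambda>i. cur_state Aex (?H i)"
  have P: "\<And>i. ?P i = (?st i, 0, resolve (dl (?st i)) (sig0 (?H i) 0) (\<tau> (?H i) 0))"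
    by (simp add: play_eq Let_def Aex_def)
  have st0: "?st 0 = 0" by (simp add: cur_state_def Aex_def)
  have s3: "?st i = 3" and r: "resolve (dl 3) (sig0 (?H i) 0) (\<tau> (?H i) 0) = 4"
    using assms P[of i] by auto
  then have sg: "sig0 (?H i) 0 []" by (simp add: res3b split: if_splits)
  obtain k where k: "i = Suc k" using s3 st0 by (cases i) auto
  have "fst (?P k) = 1" using sg k last_hist[of Aex lf0 sig0 \<tau> k] by (simp add: sig0_def)
  then have sk: "?st k = 1" using P[of k] by simp
  obtain m where m: "k = Suc m" using sk st0 by (cases k) auto
  have e1: "snd (snd (?P m)) = 1" using sk m cur_Suc[of Aex lf0 sig0 \<tau> m] by simp
  then have "resolve (dl (?st m)) (sig0 (?H m) 0) (\<tau> (?H m) 0) = 1"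
    using P[of m] by simp
  then have "?st m = 0" by (rule res1)
  then have "?P m = (0,0,1)" using P[of m] e1 by simp
  then show ?thesis using k m by auto
qed

lemma claim2:
  assumes "play Aex lf0 sig0 \<tau> i = (3,0,5)"
  shows "\<exists>m. i = m + 2 \<and> play Aex lf0 sig0 \<tau> m = (0,0,2)"
proof -
  let ?P = "play Aex lf0 sig0 \<tau>" and ?H = "hist Aex lf0 sig0 \<tau>"
  let ?st = "\<lambda>i. cur_state Aex (?H i)"
  have P: "\<And>i. ?P i = (?st i, 0, resolve (dl (?st i)) (sig0 (?H i) 0) (\<tau> (?H i) 0))"
    by (simp add: play_eq Let_def Aex_def)
  have st0: "?st 0 = 0" by (simp add: cur_state_def Aex_def)
  have s3: "?st i = 3" and r: "resolve (dl 3) (sig0 (?H i) 0) (\<tau> (?H i) 0) = 5"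
    using assms P[of i] by auto
  then have sg: "\<not> sig0 (?H i) 0 []" by (simp add: res3b split: if_splits)
  obtain k where k: "i = Suc k" using s3 st0 by (cases i) auto
  have "fst (?P k) \<noteq> 1" using sg k last_hist[of Aex lf0 sig0 \<tau> k] by (simp add: sig0_def)
  then have sk1: "?st k \<noteq> 1" using P[of k] by simp
  have "snd (snd (?P k)) = 3" using s3 k cur_Suc[of Aex lf0 sig0 \<tau> k] by simp
  then have "resolve (dl (?st k)) (sig0 (?H k) 0) (\<tau> (?H k) 0) = 3"
    using P[of k] by simp
  then have sk: "?st k = 2" using sk1 res3 by blast
  obtain m where m: "k = Suc m" using sk st0 by (cases k) auto
  have e1: "snd (snd (?P m)) = 2" using sk m cur_Suc[of Aex lf0 sig0 \<tau> m] by simp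
  then have "resolve (dl (?st m)) (sig0 (?H m) 0) (\<tau> (?H m) 0) = 2"
    using P[of m] by simp
  then have "?st m = 0" by (rule res2)
  then have "?P m = (0,0,2)" using P[of m] e1 by simp
  then show ?thesis using k m by auto
qed

lemma fin_transfer:
  assumes "\<And>i. \<rho> i = x \<Longrightarrow> \<exists>m. i = m + 2 \<and> \<rho> m = y"
  shows "finite {i. \<rho> i = y} \<Longrightarrow> finite {i. \<rho> i = x}"
proof -
  assume f: "finite {i. \<rho> i = y}"
  have "{i. \<rho> i = x} \<subseteq> (\<lambda>m. m + 2) ` {i. \<rho> i = y}" using assms by blast
  then show ?thesis using f finite_surj by blast
qed

lemma sig0_wins: "streett_accepting Aex (play Aex lf0 sig0 \<tau>)"
proof -
  have a: "finite {i. play Aex lf0 sig0 \<tau> i = (0,0,1)} \<Longrightarrow> finite {i. play Aex lf0 sig0 \<tau> i = (3,0,4)}"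
    by (rule fin_transfer) (rule claim1)
  have b: "finite {i. play Aex lf0 sig0 \<tau> i = (0,0,2)} \<Longrightarrow> finite {i. play Aex lf0 sig0 \<tau> i = (3,0,5)}"
    by (rule fin_transfer) (rule claim2)
  show ?thesis unfolding streett_accepting_def using a b by (auto simp: Aex_def)
qed


definition rho :: "(nat \<Rightarrow> trans set) \<Rightarrow> nat \<Rightarrow> nat \<Rightarrow> nat \<Rightarrow> nat \<Rightarrow> trans" where
  "rho F j b g i = (if i mod 4 = 0 then (0,0,j) else if i mod 4 = 1 then (j,0,3)
     else if i mod 4 = 2 then (3,0, if (3,0,b) \<in> F i then b else g)
     else (if (3,0,b) \<in> F (i - 1) then b else g, 0, 0))"

lemma rho_props:
  assumes F1': "\<forall>k. {(0,0,1),(0,0,2),(1,0,3),(2,0,3),(4,0,0),(5,0,0)} \<subseteq> F k"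
    and F2': "\<forall>k. (3,0,4) \<in> F k \<or> (3,0,5) \<in> F k"
    and jbg: "(j = 2 \<and> b = 4 \<and> g = 5) \<or> (j = 1 \<and> b = 5 \<and> g = (4::nat))"
  shows "fst (rho F j b g 0) = 0" "snd (snd (rho F j b g i)) = fst (rho F j b g (Suc i))"
    "rho F j b g i \<in> F i"
proof -
  note F1 = F1'[rule_format] and F2 = F2'[rule_format]
  show "fst (rho F j b g 0) = 0" by (simp add: rho_def)
  have m: "Suc i mod 4 = (if i mod 4 = 3 then 0 else Suc (i mod 4))" by (simp add: mod_Suc)
  have "i mod 4 < 4" by simp
  then have c: "i mod 4 = 0 \<or> i mod 4 = 1 \<or> i mod 4 = 2 \<or> i mod 4 = 3" by linarith
  show "snd (snd (rho F j b g i)) = fst (rho F j b g (Suc i))"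
    using c m by (auto simp: rho_def)
  show "rho F j b g i \<in> F i"
  proof -
    have "i mod 4 = 3 \<Longrightarrow> (if (3,0,b) \<in> F (i - 1) then b else g, 0::nat, 0::nat) \<in> F i"
      using F1[of i] jbg by auto
    moreover have "(3,0, if (3,0,b) \<in> F i then b else g) \<in> F i"
      using F2[of i] jbg by auto
    moreover have "(0,0,j) \<in> F i" "(j,0,3) \<in> F i" using F1[of i] jbg by auto
    ultimately show ?thesis using c unfolding rho_def by (elim disjE) simp_all
  qed
qed

lemma rho_bad:
  assumes "infinite {n. (3,0,b) \<in> F (4*n+2)}" and "j' \<noteq> j" "j' \<noteq> 3" "b \<noteq> 0" "g \<noteq> 0"
  shows "infinite {i. rho F j b g i = (3,0,b)}" "{i. rho F j b g i = (0,0,j')} = {}"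
proof -
  have "(\<lambda>n. 4*n+2) ` {n. (3,0,b) \<in> F (4*n+2)} \<subseteq> {i. rho F j b g i = (3,0,b)}"
  proof
    fix x assume "x \<in> (\<lambda>n. 4*n+2) ` {n. (3,0,b) \<in> F (4*n+2)}"
    then obtain n where n: "x = 4*n+2" "(3,0,b) \<in> F (4*n+2)" by auto
    have "(4*n+2) mod 4 = (2::nat)" by presburger
    then show "x \<in> {i. rho F j b g i = (3,0,b)}" using n by (simp add: rho_def)
  qed
  moreover have "inj_on (\<lambda>n::nat. 4*n+2) {n. (3,0,b) \<in> F (4*n+2)}" by (auto simp: inj_on_def)
  then have "infinite ((\<lambda>n::nat. 4*n+2) ` {n. (3,0,b) \<in> F (4*n+2)})"
    using assms(1) by (simp add: finite_image_iff)
  ultimately show "infinite {i. rho F j b g i = (3,0,b)}"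
    using infinite_super by blast
  show "{i. rho F j b g i = (0,0,j')} = {}"
  proof (rule equals0I)
    fix i assume "i \<in> {i. rho F j b g i = (0,0,j')}"
    then have e: "rho F j b g i = (0,0,j')" by simp
    show False
    proof (cases "i mod 4 = 0")
      case True then show False using e assms(2) by (simp add: rho_def)
    next
      case False then show False using e assms(3,4,5) unfolding rho_def
        by (cases "i mod 4 = 1"; cases "i mod 4 = 2"; cases "(3,0,b) \<in> F (i - 1)") simp_all
    qed
  qed
qed

lemma box_facts:
  shows "{(0,0,1),(0,0,2),(1,0,3),(2,0,3),(4,0,0),(5,0,0)} \<subseteq> box Aex 0 ls"
    "(3,0,4) \<in> box Aex 0 ls \<or> (3,0,5) \<in> box Aex 0 ls"
  by (auto simp: box_def Aex_def dl_def)

theorem mainTheorem12: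
  shows "\<exists>A. wf_aut A \<and> (\<forall>q\<in>states A. \<forall>a\<in>alphabet A. dnf (delta A q a)) \<and> exists_gfg A \<and>
    \<not> (\<exists>f :: nat list \<Rightarrow> trans set.
          (\<forall>u a. set u \<subseteq> alphabet A \<longrightarrow> a \<in> alphabet A \<longrightarrow> f (u @ [a]) \<in> boxes_letter A a) \<and>
          (\<forall>w\<in>lang A. univ_accepting A (\<lambda>i. f (map w [0..<Suc i]))))"
proof (intro exI conjI)
  show "wf_aut Aex" by (auto simp: wf_aut_def Aex_def dl_def)
  show "\<forall>q\<in>states Aex. \<forall>a\<in>alphabet Aex. dnf (delta Aex q a)" by (auto simp: Aex_def dl_def)
  show "exists_gfg Aex" unfolding exists_gfg_def
  proof (intro exI allI impI disjI2)
    fix lf :: "trans list \<Rightarrow> nat" and \<tau>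
    assume "\<forall>h. lf h \<in> alphabet Aex"
    then have "lf = lf0" by (auto simp: Aex_def)
    then show "streett_accepting Aex (play Aex lf sig0 \<tau>)" using sig0_wins by simp
  qed
  define w0 :: "nat \<Rightarrow> nat" where "w0 = (\<lambda>_. 0)"
  have w0L: "w0 \<in> lang Aex" unfolding lang_def w0_def using sig0_wins by (auto simp: Aex_def)
  show "\<not> (\<exists>f :: nat list \<Rightarrow> trans set.
          (\<forall>u a. set u \<subseteq> alphabet Aex \<longrightarrow> a \<in> alphabet Aex \<longrightarrow> f (u @ [a]) \<in> boxes_letter Aex a) \<and>
          (\<forall>w\<in>lang Aex. univ_accepting Aex (\<lambda>i. f (map w [0..<Suc i]))))"
  proof
    assume "\<exists>f :: nat list \<Rightarrow> trans set.
          (\<forall>u a. set u \<subseteq> alphabet Aex \<longrightarrow> a \<in> alphabet Aex \<longrightarrow> f (u @ [a]) \<in> boxes_letter Aex a) \<and>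
          (\<forall>w\<in>lang Aex. univ_accepting Aex (\<lambda>i. f (map w [0..<Suc i])))"
    then obtain f :: "nat list \<Rightarrow> trans set" where
      f1: "\<forall>u a. set u \<subseteq> alphabet Aex \<longrightarrow> a \<in> alphabet Aex \<longrightarrow> f (u @ [a]) \<in> boxes_letter Aex a"
      and f2: "\<forall>w\<in>lang Aex. univ_accepting Aex (\<lambda>i. f (map w [0..<Suc i]))" by blast
    define F where "F = (\<lambda>i. f (map w0 [0..<Suc i]))"
    have UA: "univ_accepting Aex F" using f2 w0L unfolding F_def by blast
    have "\<forall>i. \<exists>ls. F i = box Aex 0 ls"
    proof
      fix i
      have "F i = f (map w0 [0..<i] @ [0])" by (simp add: F_def w0_def)
      moreover have "set (map w0 [0..<i]) \<subseteq> alphabet Aex" by (auto simp: w0_def Aex_def)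
      ultimately have "F i \<in> boxes_letter Aex 0" using f1 by (auto simp: Aex_def)
      then show "\<exists>ls. F i = box Aex 0 ls" by (auto simp: boxes_letter_def)
    qed
    then obtain LS where LS: "\<And>i. F i = box Aex 0 (LS i)" by metis
    have F1: "\<And>i. {(0,0,1),(0,0,2),(1,0,3),(2,0,3),(4,0,0),(5,0,0)} \<subseteq> F i"
      unfolding LS by (rule box_facts(1))
    have F2: "\<And>i. (3,0,4) \<in> F i \<or> (3,0,5) \<in> F i"
      unfolding LS by (rule box_facts(2))
    have acc: "streett_accepting Aex (rho F j b g)"
      if jbg: "(j = 2 \<and> b = 4 \<and> g = 5) \<or> (j = 1 \<and> b = 5 \<and> g = (4::nat))" for j b g
    proof -
      have F1': "\<forall>k. {(0,0,1),(0,0,2),(1,0,3),(2,0,3),(4,0,0),(5,0,0)} \<subseteq> F k" using F1 by blast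
      have F2': "\<forall>k. (3,0,4) \<in> F k \<or> (3,0,5) \<in> F k" using F2 by blast
      note r = rho_props[OF F1' F2' jbg]
      have "fst (rho F j b g 0) = init Aex" using r(1) by (simp add: Aex_def)
      moreover have "\<forall>i. snd (snd (rho F j b g i)) = fst (rho F j b g (Suc i))" using r(2) by blast
      moreover have "\<forall>i. rho F j b g i \<in> F i" using r(3) by blast
      ultimately show ?thesis using UA unfolding univ_accepting_def by blast
    qed
    have "{n. (3,0,4) \<in> F (4*n+2)} \<union> {n. (3,0,5) \<in> F (4*n+2)} = UNIV" using F2 by auto
    then have "infinite {n. (3,0,4) \<in> F (4*n+2)} \<or> infinite {n. (3,0,5) \<in> F (4*n+2)}"
      by (metis finite_UnI infinite_UNIV_nat)
    then show False
    proof
      assume i: "infinite {n. (3,0,4) \<in> F (4*n+2)}"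
      have "streett_accepting Aex (rho F 2 4 5)" using acc by simp
      then have "finite {i. rho F 2 4 5 i \<in> {(3,0,4)}} \<or> infinite {i. rho F 2 4 5 i \<in> {(0,0,1)}}"
        unfolding streett_accepting_def Aex_def by simp
      moreover have "infinite {i. rho F 2 4 5 i = (3,0,4)}" "{i. rho F 2 4 5 i = (0,0,1)} = {}"
        using rho_bad[OF i, where j'=1 and j=2 and g=5] by simp_all
      ultimately show False by simp
    next
      assume i: "infinite {n. (3,0,5) \<in> F (4*n+2)}"
      have "streett_accepting Aex (rho F 1 5 4)" using acc by simp
      then have "finite {i. rho F 1 5 4 i \<in> {(3,0,5)}} \<or> infinite {i. rho F 1 5 4 i \<in> {(0,0,2)}}"
        unfolding streett_accepting_def Aex_def by simp
      moreover have "infinite {i. rho F 1 5 4 i = (3,0,5)}" "{i. rho F 1 5 4 i = (0,0,2)} = {}"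
        using rho_bad[OF i, where j'=2 and j=1 and g=4] by simp_all
      ultimately show False by simp
    qed
  qed
qed

end
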